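(* Let $K:[0,\infty)\to[0,\infty)$ be a $K$-function (see context) and let $U=\{D(z_n,r_n)\}_n$ be a $K$-set. Let $\phi\in[0,2\pi]$. Then the set $C\subset(0,\infty)$ of those $c>0$ for which the boundary curve $\partial\Lambda(K,\phi,c)$ intersects infinitely many of the discs $D(z_n,r_n)$ has Lebesgue measure zero. Moreover, the projection $E$ of $U$ onto $[1,\infty)$ satisfies $\int_E\frac{dx}{K(x)}<\infty$.
   Context: A $K$-function is a function $K:[0,\infty)\to[0,\infty)$ that is strictly increasing, continuous and concave, with $K(x_0)=0$ for some $x_0\ge 0$, and that satisfies the doubling condition: there exist constants $\alpha\in(1,2]$ and $R\ge1$ such that $K(2x)\le \alpha K(x)$ for all $x\ge R$. For $z_0\in\mathbb{C}$, $r>0$, $D(z_0,r)=\{z:|z-z_0|<r\}$. A $K$-set is a countable collection of discs $D(z_n,r_n)$ with $z_n\in\mathbb{C}$, $|z_n|\to\infty$, $r_n>0$ and $\sum_n \frac{r_n}{K(|z_n|)}<\infty$. For $\phi\in[0,2\pi]$ and $c>0$, $\Lambda(K,\phi,c)=\{z\in\mathbb{C}: |\operatorname{Im}(ze^{-i\phi})|\le cK(\operatorname{Re}(ze^{-i\phi})),\ \operatorname{Re}(ze^{-i\phi})\ge x_0\}$ (for $\phi=0$ its boundary consists of the curves $y=\pm cK(x)$, $x\ge x_0$). The projection of a collection $U$ of discs onto $[1,\infty)$ is $E=\{|z|: z\in\bigcup_n D(z_n,r_n)\}\cap[1,\infty)$. *)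

theory Defs
  imports "HOL-Analysis.Analysis"
begin

definition K_function :: "(real \<Rightarrow> real) \<Rightarrow> bool" where
  "K_function K \<longleftrightarrow>
     (\<forall>x\<ge>0. K x \<ge> 0) \<and>
     strict_mono_on {0..} K \<and>
     continuous_on {0..} K \<and>
     concave_on {0..} K \<and>
     (\<exists>x0\<ge>0. K x0 = 0) \<and>
     (\<exists>\<alpha> R. 1 < \<alpha> \<and> \<alpha> \<le> 2 \<and> R \<ge> 1 \<and> (\<forall>x\<ge>R. K (2 * x) \<le> \<alpha> * K x))"

definition K_set :: "(real \<Rightarrow> real) \<Rightarrow> (nat \<Rightarrow> complex) \<Rightarrow> (nat \<Rightarrow> real) \<Rightarrow> bool" where
  "K_set K z r \<longleftrightarrow>
     filterlim (\<lambda>n. norm (z n)) at_top sequentially \<and>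
     (\<forall>n. r n > 0) \<and>
     summable (\<lambda>n. r n / K (norm (z n)))"

definition Lambda_set :: "(real \<Rightarrow> real) \<Rightarrow> real \<Rightarrow> real \<Rightarrow> real \<Rightarrow> complex set" where
  "Lambda_set K x0 \<phi> c =
     {z. \<bar>Im (z * cis (-\<phi>))\<bar> \<le> c * K (Re (z * cis (-\<phi>))) \<and> Re (z * cis (-\<phi>)) \<ge> x0}"

definition projection_set :: "(nat \<Rightarrow> complex) \<Rightarrow> (nat \<Rightarrow> real) \<Rightarrow> real set" where
  "projection_set z r = {norm w | w. \<exists>n. w \<in> ball (z n) (r n)} \<inter> {1..}"

end

theory Submission
  imports Defs
begin

locale Kfun =
  fixes K :: "real \<Rightarrow> real"
  assumes nonneg: "\<And>x. x \<ge> 0 \<Longrightarrow> K x \<ge> 0"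
    and smono: "strict_mono_on {0..} K"
    and cont: "continuous_on {0..} K"
    and conc: "concave_on {0..} K"
    and K0: "K 0 = 0"
begin

lemma mono: "0 \<le> a \<Longrightarrow> a \<le> b \<Longrightarrow> K a \<le> K b"
proof (cases "a = b")
  case False
  assume "0 \<le> a" "a \<le> b"
  with False have "a < b" by simp
  with smono \<open>0 \<le> a\<close> have "K a < K b" unfolding strict_mono_on_def by auto
  then show ?thesis by simp
qed simp

lemma pos: "x > 0 \<Longrightarrow> K x > 0"
proof -
  assume "x > 0"
  with smono have "K 0 < K x" unfolding strict_mono_on_def by auto
  with K0 show ?thesis by simp
qed

lemma scale: assumes "0 \<le> t" "t \<le> 1" "0 \<le> x" shows "t * K x \<le> K (t * x)"
  using concave_onD[OF conc, of t 0 x] assms K0 by simp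

lemma lin: assumes "u \<ge> 1" shows "K u \<le> K 1 * u"
proof -
  have "(1/u) * K u \<le> K ((1/u) * u)" using assms by (intro scale) auto
  then show ?thesis using assms by (simp add: field_simps)
qed

lemma ratio: assumes "0 < a" "a \<le> b" shows "K b \<le> K a * b / a"
proof -
  have "(a/b) * K b \<le> K ((a/b) * b)" using assms by (intro scale) auto
  then show ?thesis using assms by (simp add: field_simps)
qed


lemma LB:
  assumes "0 \<le> m" "Re p \<ge> 0" "\<bar>Im p\<bar> = c * K (Re p)" "0 < c" "c \<le> m"
    "norm p > \<rho>/2" "\<rho> \<ge> 2*(1 + m*K 1)"
  shows "Re p > 1" "Re p \<ge> \<rho>/(2*(1+m*K 1))"
proof -
  have K1: "K 1 \<ge> 0" using nonneg by simp
  have np: "norm p \<le> Re p + c * K (Re p)" using cmod_le[of p] assms by simp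
  have cK: "c * K (Re p) \<le> m * K (Re p)" using assms nonneg[of "Re p"] by (intro mult_right_mono) auto
  show u1: "Re p > 1"
  proof (rule ccontr)
    assume "\<not> Re p > 1"
    then have "K (Re p) \<le> K 1" using mono assms by simp
    then have "m * K (Re p) \<le> m * K 1" using assms by (intro mult_left_mono) auto
    then have "norm p \<le> 1 + m * K 1" using np cK \<open>\<not> Re p > 1\<close> by linarith
    moreover have "1 + m*K 1 \<le> \<rho>/2" using assms(7) by simp
    ultimately show False using assms(6) by linarith
  qed
  have "K (Re p) \<le> K 1 * Re p" using lin u1 by simp
  then have "m * K (Re p) \<le> m * (K 1 * Re p)" using assms by (intro mult_left_mono) auto
  then have "norm p \<le> (1 + m * K 1) * Re p" using np cK by (simp add: algebra_simps)
  then have "\<rho>/2 < (1 + m * K 1) * Re p" using assms by linarith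
  moreover have "1 + m * K 1 > 0" using assms K1 by (simp add: add_pos_nonneg)
  ultimately show "Re p \<ge> \<rho>/(2*(1+m*K 1))" by (simp add: field_simps)
qed

lemma half:
  fixes A m \<rho> r c c' :: real
  defines "A \<equiv> 1 + m * K 1"
  assumes "0 \<le> m"
    "Re p \<ge> 0" "\<bar>Im p\<bar> = c * K (Re p)" "0 < c" "c \<le> m"
    "Re p' \<ge> 0" "\<bar>Im p'\<bar> = c' * K (Re p')" "0 < c'" "c' \<le> m"
    "norm p > \<rho> - r" "norm p' > \<rho> - r" "norm (p - p') < 2*r" and r2: "r \<le> \<rho>/2" and rho1: "\<rho> \<ge> 1" and "\<rho> \<ge> 2*A"
    and le: "Re p \<le> Re p'"
  shows "\<bar>c - c'\<bar> \<le> (4*A + 4*A*m*K 1) * r / K \<rho>"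
proof -
  define u u' \<mu> \<kappa> where "u = Re p" "u' = Re p'" "\<mu> = \<rho>/(2*A)" "\<kappa> = K \<rho> / (2*A)"
  have K1: "K 1 \<ge> 0" using nonneg by simp
  have A1: "A \<ge> 1" using K1 assms by (simp add: A_def)
  have rpos: "r > 0" using assms(13) norm_ge_zero[of "p-p'"] by linarith
  have Kr: "K \<rho> > 0" using pos rho1 by simp
  have np: "norm p > \<rho>/2" "norm p' > \<rho>/2" using assms by linarith+
  have u: "u > 1" "u \<ge> \<mu>" using LB[of m p c \<rho>] assms np unfolding u_u'_\<mu>_\<kappa>_def A_def by auto
  have u': "u' \<ge> \<mu>" using LB[of m p' c' \<rho>] assms np unfolding u_u'_\<mu>_\<kappa>_def A_def by auto
  have mupos: "\<mu> > 0" using A1 assms unfolding u_u'_\<mu>_\<kappa>_def by simp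
  have "K \<mu> \<ge> (1/(2*A)) * K \<rho>"
    using scale[of "1/(2*A)" \<rho>] A1 assms unfolding u_u'_\<mu>_\<kappa>_def by (simp add: field_simps)
  moreover have "K u \<ge> K \<mu>" using mono u mupos by simp
  ultimately have Ku: "K u \<ge> \<kappa>" unfolding u_u'_\<mu>_\<kappa>_def by simp
  have kpos: "\<kappa> > 0" using Kr A1 unfolding u_u'_\<mu>_\<kappa>_def by simp
  have d: "\<bar>u - u'\<bar> < 2*r" using abs_Re_le_cmod[of "p - p'"] assms unfolding u_u'_\<mu>_\<kappa>_def by simp
  have di: "\<bar>Im p - Im p'\<bar> < 2*r" using abs_Im_le_cmod[of "p - p'"] assms by simp
  have rat: "K u' \<le> K u * u' / u" using ratio[of u u'] u assms unfolding u_u'_\<mu>_\<kappa>_def by simp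
  have Kmono: "K u \<le> K u'" using mono[of u u'] u assms unfolding u_u'_\<mu>_\<kappa>_def by simp
  have "K u' - K u \<le> K u * (u' - u) / u" using rat u by (simp add: field_simps)
  also have "\<dots> \<le> K u * (2*r) / \<mu>"
  proof -
    have Kup: "K u \<ge> 0" using nonneg u by simp
    have "(u' - u) / u \<le> (2*r) / \<mu>"
      using d u mupos le unfolding u_u'_\<mu>_\<kappa>_def
      by (intro frac_le) auto
    then show ?thesis using Kup by (metis mult_left_mono times_divide_eq_right)
  qed
  finally have dK: "K u' - K u \<le> K u * (2*r) / \<mu>" .
  have e1: "\<bar>c * K u - c' * K u'\<bar> < 2*r" using assms(4,8) di unfolding u_u'_\<mu>_\<kappa>_def by linarith
  have e2: "0 \<le> c' * (K u' - K u)" using Kmono assms by simp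
  have e3: "c' * (K u' - K u) \<le> m * (K u * (2*r) / \<mu>)"
  proof -
    have "c' * (K u' - K u) \<le> c' * (K u * (2*r) / \<mu>)" using dK assms by (intro mult_left_mono) auto
    also have "\<dots> \<le> m * (K u * (2*r) / \<mu>)"
      using assms nonneg[of u] u rpos mupos by (intro mult_right_mono) auto
    finally show ?thesis .
  qed
  have "(c - c') * K u = (c * K u - c' * K u') + c' * (K u' - K u)" by (simp add: algebra_simps)
  then have "\<bar>c - c'\<bar> * K u \<le> 2*r + m * (K u * (2*r) / \<mu>)"
    using e1 e2 e3 by (simp add: abs_mult[symmetric])
  then have X: "\<bar>c - c'\<bar> \<le> 2*r / K u + m * (2*r) / \<mu>"
    using Ku kpos by (simp add: field_simps)
  have a1: "2*r / K u \<le> 2*r / \<kappa>" using Ku kpos rpos by (intro divide_left_mono) auto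
  have a2: "2*r / \<kappa> = 4*A*r / K \<rho>" unfolding u_u'_\<mu>_\<kappa>_def using A1 by (simp add: field_simps)
  have b1: "m * (2*r) / \<mu> = 4*A*m*r / \<rho>" unfolding u_u'_\<mu>_\<kappa>_def using A1 rho1 by (simp add: field_simps)
  have b2: "4*A*m*r / \<rho> \<le> 4*A*m*K 1*r / K \<rho>"
  proof -
    have "K \<rho> \<le> K 1 * \<rho>" using lin rho1 by simp
    then have "1/\<rho> \<le> K 1 / K \<rho>" using Kr rho1 by (simp add: field_simps)
    then have "(4*A*m*r) * (1/\<rho>) \<le> (4*A*m*r) * (K 1 / K \<rho>)"
      using A1 assms rpos by (intro mult_left_mono) auto
    then show ?thesis by (simp add: mult_ac)
  qed
  have fin: "\<bar>c - c'\<bar> \<le> 4*A*r / K \<rho> + 4*A*m*K 1*r / K \<rho>" using X a1 a2 b1 b2 by linarith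
  have "(4*A + 4*A*m*K 1) * r / K \<rho> = 4*A*r / K \<rho> + 4*A*m*K 1*r / K \<rho>"
    by (simp add: add_divide_distrib ring_distribs)
  with fin show ?thesis by linarith
qed


lemma core:
  fixes A m \<rho> r c c' :: real
  defines "A \<equiv> 1 + m * K 1"
  assumes "0 \<le> m"
    "Re p \<ge> 0" "\<bar>Im p\<bar> = c * K (Re p)" "0 < c" "c \<le> m"
    "Re p' \<ge> 0" "\<bar>Im p'\<bar> = c' * K (Re p')" "0 < c'" "c' \<le> m"
    "norm p > \<rho> - r" "norm p' > \<rho> - r" "norm (p - p') < 2*r" "r \<le> \<rho>/2" "\<rho> \<ge> 1" "\<rho> \<ge> 2*A"
  shows "\<bar>c - c'\<bar> \<le> (4*A + 4*A*m*K 1) * r / K \<rho>"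
proof (cases "Re p \<le> Re p'")
  case True
  then show ?thesis using half[of m p c p' c' \<rho> r] assms by simp
next
  case False
  have "norm (p' - p) < 2*r" using assms(13) by (simp add: norm_minus_commute)
  then show ?thesis using half[of m p' c' p c \<rho> r] assms False by (simp add: abs_minus_commute)
qed

lemma frontier_sub:
  assumes "c > 0"
  shows "frontier (Lambda_set K 0 \<phi> c) \<subseteq>
    {w. Re (w * cis (-\<phi>)) \<ge> 0 \<and> \<bar>Im (w * cis (-\<phi>))\<bar> = c * K (Re (w * cis (-\<phi>)))}"
proof -
  let ?g = "\<lambda>w. w * cis (-\<phi>)"
  define S0 where "S0 = {w. (0::real) \<le> Re (?g w)}"
  define S1 where "S1 = {w. (0::real) < Re (?g w)}"
  have cg: "continuous_on UNIV (\<lambda>w. Re (?g w))" by (intro continuous_intros)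
  have cz: "continuous_on UNIV (\<lambda>w::complex. (0::real))" by (intro continuous_intros)
  have S0c: "closed S0" unfolding S0_def by (rule closed_Collect_le[OF cz cg])
  have S1o: "open S1" unfolding S1_def by (rule open_Collect_less[OF cz cg])
  have cK0: "continuous_on S0 (\<lambda>w. c * K (Re (?g w)))"
    by (intro continuous_intros continuous_on_compose2[OF cont]) (auto simp: S0_def)
  have cK1: "continuous_on S1 (\<lambda>w. c * K (Re (?g w)))"
    by (intro continuous_intros continuous_on_compose2[OF cont]) (auto simp: S1_def)
  have cI: "continuous_on S (\<lambda>w. \<bar>Im (?g w)\<bar>)" for S by (intro continuous_intros)
  have L: "Lambda_set K 0 \<phi> c = {w \<in> S0. \<bar>Im (?g w)\<bar> \<le> c * K (Re (?g w))}"
    unfolding Lambda_set_def S0_def by auto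
  have Lc: "closed (Lambda_set K 0 \<phi> c)" unfolding L
    by (rule continuous_on_closed_Collect_le[OF cI cK0 S0c])
  obtain Op where Op: "open Op" "Op \<inter> S1 = {w \<in> S1. \<bar>Im (?g w)\<bar> < c * K (Re (?g w))}"
    using open_Collect_less_Int[OF cI cK1] by blast
  have "Op \<inter> S1 \<subseteq> interior (Lambda_set K 0 \<phi> c)"
  proof (rule interior_maximal)
    show "open (Op \<inter> S1)" using Op S1o by blast
    show "Op \<inter> S1 \<subseteq> Lambda_set K 0 \<phi> c" unfolding Op(2) by (auto simp: Lambda_set_def S1_def)
  qed
  show ?thesis
  proof
    fix w assume w: "w \<in> frontier (Lambda_set K 0 \<phi> c)"
    then have wL: "w \<in> Lambda_set K 0 \<phi> c" using Lc frontier_subset_closed by blast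
    have wi: "w \<notin> interior (Lambda_set K 0 \<phi> c)" using w by (simp add: frontier_def)
    show "w \<in> {w. Re (w * cis (-\<phi>)) \<ge> 0 \<and> \<bar>Im (w * cis (-\<phi>))\<bar> = c * K (Re (w * cis (-\<phi>)))}"
    proof (cases "Re (?g w) = 0")
      case True
      then show ?thesis using wL K0 by (simp add: Lambda_set_def)
    next
      case False
      then have "w \<in> S1" using wL by (auto simp: Lambda_set_def S1_def)
      then have "\<not> \<bar>Im (?g w)\<bar> < c * K (Re (?g w))"
        using wi \<open>Op \<inter> S1 \<subseteq> _\<close> Op(2) by blast
      then show ?thesis using wL by (auto simp: Lambda_set_def)
    qed
  qed
qed

end

locale KS = Kfun +
  fixes z :: "nat \<Rightarrow> complex" and r :: "nat \<Rightarrow> real" and \<phi> :: real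
  assumes zlim: "filterlim (\<lambda>n. norm (z n)) at_top sequentially"
    and rpos: "\<And>n. r n > 0"
    and summ: "summable (\<lambda>n. r n / K (norm (z n)))"
begin

lemma eventually_good:
  fixes A :: real
  shows "\<exists>N0. \<forall>n\<ge>N0. norm (z n) \<ge> 1 \<and> norm (z n) \<ge> A \<and> r n \<le> norm (z n) / 2"
proof -
  have K1: "K 1 > 0" using pos by simp
  have t0: "(\<lambda>n. r n / K (norm (z n))) \<longlonglongrightarrow> 0" using summ by (rule summable_LIMSEQ_zero)
  have "\<forall>Z. \<forall>\<^sub>F n in sequentially. Z \<le> norm (z n)" using zlim by (simp add: filterlim_at_top)
  then have e1: "eventually (\<lambda>n. norm (z n) \<ge> max 1 A) sequentially" by blast
  have e2: "eventually (\<lambda>n. r n / K (norm (z n)) < 1/(2*K 1)) sequentially"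
    by (rule order_tendstoD(2)[OF t0]) (use K1 in simp)
  have "eventually (\<lambda>n. norm (z n) \<ge> 1 \<and> norm (z n) \<ge> A \<and> r n \<le> norm (z n) / 2) sequentially"
    using e1 e2
  proof eventually_elim
    case (elim n)
    define \<rho> where "\<rho> = norm (z n)"
    have r1: "\<rho> \<ge> 1" using elim \<rho>_def by simp
    have Kr: "K \<rho> > 0" using pos r1 by simp
    have "r n / K \<rho> < 1/(2*K 1)" using elim \<rho>_def by simp
    then have "r n < K \<rho> / (2 * K 1)" using Kr K1 by (simp add: field_simps)
    also have "K \<rho> \<le> K 1 * \<rho>" using lin r1 by simp
    then have "K \<rho> / (2 * K 1) \<le> \<rho> / 2" using K1 by (simp add: field_simps)
    finally show ?case using elim \<rho>_def by simp
  qed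
  then show ?thesis by (simp add: eventually_sequentially)
qed

lemma null_m:
  fixes mm :: real
  assumes mm: "mm \<ge> 0"
  shows "{c. 0 < c \<and> c \<le> mm \<and> infinite {n. frontier (Lambda_set K 0 \<phi> c) \<inter> ball (z n) (r n) \<noteq> {}}}
           \<in> null_sets lebesgue"
proof -
  define A where "A = 1 + mm * K 1"
  define M where "M = 4*A + 4*A*mm*K 1"
  define \<delta> where "\<delta> n = M * r n / K (norm (z n))" for n
  have K1: "K 1 > 0" using pos by simp
  have Mpos: "M \<ge> 0" using K1 mm by (simp add: M_def A_def)
  obtain N0 where N0: "\<And>n. n \<ge> N0 \<Longrightarrow> norm (z n) \<ge> 1 \<and> norm (z n) \<ge> 2*A \<and> r n \<le> norm (z n) / 2"
    using eventually_good[of "2*A"] by blast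
  have dpos: "\<delta> n \<ge> 0" if "n \<ge> N0" for n
  proof -
    have "K (norm (z n)) > 0" by (intro pos) (meson N0[OF that] less_le_trans zero_less_one)
    then show ?thesis using rpos[of n] Mpos by (simp add: \<delta>_def)
  qed
  define S where "S n = {c. 0 < c \<and> c \<le> mm \<and> frontier (Lambda_set K 0 \<phi> c) \<inter> ball (z n) (r n) \<noteq> {}}" for n
  have close: "\<bar>c - c'\<bar> \<le> \<delta> n" if n: "n \<ge> N0" and c: "c \<in> S n" and c': "c' \<in> S n" for n c c'
  proof -
    obtain w where w: "w \<in> frontier (Lambda_set K 0 \<phi> c)" "w \<in> ball (z n) (r n)" using c S_def by auto
    obtain w' where w': "w' \<in> frontier (Lambda_set K 0 \<phi> c')" "w' \<in> ball (z n) (r n)" using c' S_def by auto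
    define p where "p = w * cis (-\<phi>)"
    define p' where "p' = w' * cis (-\<phi>)"
    have cc: "0 < c" "c \<le> mm" "0 < c'" "c' \<le> mm" using c c' S_def by auto
    have fp: "Re p \<ge> 0" "\<bar>Im p\<bar> = c * K (Re p)" using frontier_sub[OF cc(1)] w(1) p_def by auto
    have fp': "Re p' \<ge> 0" "\<bar>Im p'\<bar> = c' * K (Re p')" using frontier_sub[OF cc(3)] w'(1) p'_def by auto
    have np: "norm p = norm w" "norm p' = norm w'" by (simp_all add: p_def p'_def norm_mult)
    have "norm (z n) \<le> norm w + norm (z n - w)" by (metis norm_triangle_sub add.commute)
    then have nw: "norm w > norm (z n) - r n" using w(2) by (simp add: dist_norm)
    have "norm (z n) \<le> norm w' + norm (z n - w')" by (metis norm_triangle_sub add.commute)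
    then have nw': "norm w' > norm (z n) - r n" using w'(2) by (simp add: dist_norm)
    have "norm (w - w') \<le> norm (z n - w) + norm (z n - w')"
      by (metis norm_diff_triangle_le norm_minus_commute order_refl)
    then have "norm (w - w') < 2 * r n" using w(2) w'(2) by (simp add: dist_norm)
    moreover have "p - p' = (w - w') * cis (-\<phi>)" by (simp add: p_def p'_def algebra_simps)
    ultimately have npp: "norm (p - p') < 2 * r n" by (simp add: norm_mult)
    show ?thesis
      using core[of mm p c p' c' "norm (z n)" "r n"] mm fp fp' cc np nw nw' npp N0[OF n]
      unfolding \<delta>_def M_def A_def by simp
  qed
  define B where "B n = (if N0 \<le> n then cball (SOME c. c \<in> S n) (\<delta> n) else {})" for n
  have SB: "S n \<subseteq> B n" if "n \<ge> N0" for n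
  proof
    fix c assume "c \<in> S n"
    then have "(SOME c. c \<in> S n) \<in> S n" by (rule someI)
    then have "\<bar>c - (SOME c. c \<in> S n)\<bar> \<le> \<delta> n" using close[OF that \<open>c \<in> S n\<close>] by blast
    then show "c \<in> B n" using that by (simp add: B_def dist_real_def abs_minus_commute)
  qed
  have Bm: "B n \<in> sets lborel" for n by (simp add: B_def)
  have meas: "measure lborel (B n) = (if N0 \<le> n then 2 * \<delta> n else 0)" for n
    using dpos[of n] by (simp add: B_def cball_eq_atLeastAtMost)
  have fin: "emeasure lborel (B n) < \<infinity>" for n
    using dpos[of n] by (simp add: B_def cball_eq_atLeastAtMost)
  have sd: "summable \<delta>" unfolding \<delta>_def using summable_mult[OF summ, of M] by (simp add: mult.assoc)
  have sm: "summable (\<lambda>n. measure lborel (B n))"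
    unfolding meas by (rule summable_comparison_test'[of "\<lambda>n. 2 * \<delta> n" N0]) (use sd dpos in auto)
  have nul: "limsup B \<in> null_sets lborel" by (rule borel_cantelli_limsup1[OF Bm fin sm])
  have sub: "{c. 0 < c \<and> c \<le> mm \<and> infinite {n. frontier (Lambda_set K 0 \<phi> c) \<inter> ball (z n) (r n) \<noteq> {}}}
     \<subseteq> limsup B"
  proof
    fix c assume c: "c \<in> {c. 0 < c \<and> c \<le> mm \<and> infinite {n. frontier (Lambda_set K 0 \<phi> c) \<inter> ball (z n) (r n) \<noteq> {}}}"
    have "\<forall>N. \<exists>m\<ge>N. c \<in> B m"
    proof
      fix N
      obtain n where n: "n \<ge> max N N0" "frontier (Lambda_set K 0 \<phi> c) \<inter> ball (z n) (r n) \<noteq> {}"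
        using c unfolding infinite_nat_iff_unbounded_le by blast
      then have "c \<in> S n" using c S_def by auto
      then have "c \<in> B n" using SB[of n] n by auto
      then show "\<exists>m\<ge>N. c \<in> B m" using n by auto
    qed
    then show "c \<in> limsup B" unfolding limsup_INF_SUP by auto
  qed
  show ?thesis by (rule null_sets_completion_subset[OF sub null_sets_completionI[OF nul]])
qed


lemma proj_finite:
  "(\<integral>\<^sup>+ x \<in> projection_set z r. ennreal (1 / K x) \<partial>lborel) < \<infinity>"
proof -
  have K1: "K 1 > 0" using pos by simp
  obtain N0 where N0: "\<And>n. n \<ge> N0 \<Longrightarrow> norm (z n) \<ge> 1 \<and> norm (z n) \<ge> 1 \<and> r n \<le> norm (z n) / 2"
    using eventually_good[of 1] by blast
  define b where "b n = (if N0 \<le> n then 2 / K (norm (z n)) else 1 / K 1)" for n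
  define I where "I n = {norm (z n) - r n .. norm (z n) + r n}" for n
  have Kz: "K (norm (z n)) > 0" if "n \<ge> N0" for n
    by (intro pos) (meson N0[OF that] less_le_trans zero_less_one)
  have bpos: "b n \<ge> 0" for n using Kz[of n] K1 by (auto simp add: b_def less_imp_le)
  have pt: "ennreal (1 / K x) * indicator (projection_set z r) x \<le> (\<Sum>n. ennreal (b n) * indicator (I n) x)" for x
  proof (cases "x \<in> projection_set z r")
    case True
    then obtain w n where w: "x = norm w" "w \<in> ball (z n) (r n)" "x \<ge> 1"
      unfolding projection_set_def by auto
    have "norm (z n) \<le> norm w + norm (z n - w)" by (metis norm_triangle_sub add.commute)
    then have l: "x > norm (z n) - r n" using w by (simp add: dist_norm)
    have "norm w \<le> norm (z n) + norm (w - z n)" by (metis norm_triangle_sub add.commute)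
    then have u: "x < norm (z n) + r n" using w by (simp add: dist_norm norm_minus_commute)
    have xI: "x \<in> I n" using l u by (simp add: I_def)
    have Kx: "K x > 0" using w by (intro pos) linarith
    have "1 / K x \<le> b n"
    proof (cases "N0 \<le> n")
      case True
      define \<rho> where "\<rho> = norm (z n)"
      have h: "\<rho>/2 \<le> x" using N0[OF True] l \<rho>_def by simp
      have "(1/2) * K \<rho> \<le> K ((1/2) * \<rho>)" using N0[OF True] \<rho>_def by (intro scale) auto
      also have "\<dots> \<le> K x" using mono[of "(1/2)*\<rho>" x] h N0[OF True] \<rho>_def by simp
      finally have "K \<rho> / 2 \<le> K x" by simp
      then have "1 / K x \<le> 1 / (K \<rho> / 2)" using Kz[OF True] \<rho>_def by (intro divide_left_mono) auto
      then show ?thesis using True \<rho>_def by (simp add: b_def)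
    next
      case False
      have "K 1 \<le> K x" using mono w by simp
      then have "1 / K x \<le> 1 / K 1" using K1 by (intro divide_left_mono) auto
      then show ?thesis using False by (simp add: b_def)
    qed
    then have "ennreal (1 / K x) * indicator (projection_set z r) x \<le> ennreal (b n) * indicator (I n) x"
      using True xI by (simp add: ennreal_leI)
    also have "\<dots> \<le> (\<Sum>n. ennreal (b n) * indicator (I n) x)"
    proof -
      have "(\<Sum>k\<in>{n}. ennreal (b k) * indicator (I k) x) \<le> (\<Sum>k. ennreal (b k) * indicator (I k) x)"
        by (intro sum_le_suminf summableI) auto
      then show ?thesis by (metis add.right_neutral empty_iff finite.emptyI sum.empty sum.insert)
    qed
    finally show ?thesis .
  qed simp
  have "(\<integral>\<^sup>+ x \<in> projection_set z r. ennreal (1 / K x) \<partial>lborel)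
      \<le> (\<integral>\<^sup>+ x. (\<Sum>n. ennreal (b n) * indicator (I n) x) \<partial>lborel)"
    by (rule nn_integral_mono) (rule pt)
  also have "\<dots> = (\<Sum>n. \<integral>\<^sup>+ x. ennreal (b n) * indicator (I n) x \<partial>lborel)"
    by (rule nn_integral_suminf) (simp add: I_def)
  also have "\<dots> = (\<Sum>n. ennreal (b n * (2 * r n)))"
  proof (rule suminf_cong)
    fix n
    have l: "norm (z n) - r n \<le> norm (z n) + r n" using rpos[of n] by simp
    have "emeasure lborel (I n) = ennreal (2 * r n)" unfolding I_def using emeasure_lborel_Icc[OF l] by simp
    then show "(\<integral>\<^sup>+ x. ennreal (b n) * indicator (I n) x \<partial>lborel) = ennreal (b n * (2 * r n))"
      using bpos[of n] rpos[of n] by (simp add: I_def nn_integral_cmult_indicator ennreal_mult)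
  qed
  also have "\<dots> = ennreal (\<Sum>n. b n * (2 * r n))"
  proof (rule suminf_ennreal2)
    show "0 \<le> b n * (2 * r n)" for n using bpos[of n] rpos[of n] by simp
    show "summable (\<lambda>n. b n * (2 * r n))"
    proof (rule summable_comparison_test'[of "\<lambda>n. 4 * (r n / K (norm (z n)))" N0])
      show "summable (\<lambda>n. 4 * (r n / K (norm (z n))))" using summ by (rule summable_mult)
      show "norm (b n * (2 * r n)) \<le> 4 * (r n / K (norm (z n)))" if "N0 \<le> n" for n
        using that Kz[OF that] rpos[of n] by (simp add: b_def)
    qed
  qed
  also have "\<dots> < \<infinity>" by simp
  finally show ?thesis .
qed

end

theorem theorem1:
  fixes K :: "real \<Rightarrow> real" and x0 :: real and z :: "nat \<Rightarrow> complex" and r :: "nat \<Rightarrow> real"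
    and \<phi> :: real
  assumes "K_function K" and "x0 \<ge> 0" and "K x0 = 0"
    and "K_set K z r"
    and "0 \<le> \<phi>" and "\<phi> \<le> 2 * pi"
  shows "{c::real. c > 0 \<and>
            infinite {n. frontier (Lambda_set K x0 \<phi> c) \<inter> ball (z n) (r n) \<noteq> {}}}
           \<in> null_sets lebesgue \<and>
         (\<integral>\<^sup>+ x \<in> projection_set z r. ennreal (1 / K x) \<partial>lborel) < \<infinity>"
proof -
  have nn: "\<And>x. x \<ge> 0 \<Longrightarrow> K x \<ge> 0" and sm: "strict_mono_on {0..} K"
    and ct: "continuous_on {0..} K" and cc: "concave_on {0..} K"
    using assms(1) unfolding K_function_def by auto
  have x00: "x0 = 0"
  proof (rule ccontr)
    assume "x0 \<noteq> 0"
    then have "0 < x0" using assms(2) by simp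
    then have "K 0 < K x0" using sm unfolding strict_mono_on_def by auto
    then show False using nn[of 0] assms(3) by simp
  qed
  have K0: "K 0 = 0" using assms(3) x00 by simp
  interpret KS K z r \<phi>
    using nn sm ct cc K0 assms(4) unfolding K_set_def by unfold_locales auto
  let ?C = "\<lambda>m::nat. {c. 0 < c \<and> c \<le> real m \<and> infinite {n. frontier (Lambda_set K 0 \<phi> c) \<inter> ball (z n) (r n) \<noteq> {}}}"
  have "{c::real. c > 0 \<and> infinite {n. frontier (Lambda_set K x0 \<phi> c) \<inter> ball (z n) (r n) \<noteq> {}}}
      = (\<Union>m. ?C m)"
    using real_arch_simple x00 by auto
  moreover have "(\<Union>m. ?C m) \<in> null_sets lebesgue"
    by (intro null_sets_UN null_m) simp
  ultimately show ?thesis using proj_finite by simp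
qed

end
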